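(* Let $p\in(1,\infty)$ and let $X$ be an asymptotically $p$-uniformly smooth Banach space. There exists $c>0$ such that for all $x,y\in X$, all $\delta>0$ and every weakly null sequence $(x_n)$ in $B_X$, there is $n_0\in\mathbb N$ such that for all $n>n_0$, $u+\delta^{1/p}\|v\|x_n\in\mathrm{Mid}(x,y,c\delta)$, where $u=\frac12(x+y)$ and $v=\frac12(x-y)$.
   Context: $X$ is asymptotically $p$-uniformly smooth if $\overline\rho_X(t)\le Ct^p$ for $t\in[0,1]$ and some $C>0$, where $\overline{\rho}_X(t)=\sup_{x\in\partial B_X}\inf_{\dim(X/E)<\infty}\sup_{h\in\partial B_E}\|x+th\|-1$. For $x,y\in X$ and $\delta>0$, $\mathrm{Mid}(x,y,\delta)=\{z\in X:\max\{\|x-z\|,\|y-z\|\}\le\frac12(1+\delta)\|x-y\|\}$. *)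

theory Defs
  imports "HOL-Analysis.Analysis"
begin

definition finite_codim :: "'a::real_normed_vector set \<Rightarrow> bool" where
  "finite_codim E \<longleftrightarrow> subspace E \<and> closed E \<and>
     (\<exists>F. finite F \<and> span (E \<union> F) = UNIV)"

text \<open>Modulus of asymptotic uniform smoothness, valued in the extended reals
  (the supremum over an empty unit sphere is -\<infinity>).\<close>
definition asym_smooth_mod :: "'a::real_normed_vector itself \<Rightarrow> real \<Rightarrow> ereal" where
  "asym_smooth_mod _ t =
     (SUP x\<in>{x::'a. norm x = 1}. INF E\<in>{E. finite_codim E}.
        SUP h\<in>{h\<in>E. norm h = 1}. ereal (norm (x + t *\<^sub>R h) - 1))"

definition asymptotically_p_uniformly_smooth :: "'a::real_normed_vector itself \<Rightarrow> real \<Rightarrow> bool" where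
  "asymptotically_p_uniformly_smooth T p \<longleftrightarrow>
     (\<exists>C>0. \<forall>t\<in>{0..1}. asym_smooth_mod T t \<le> ereal (C * t powr p))"

definition weakly_null :: "(nat \<Rightarrow> 'a::real_normed_vector) \<Rightarrow> bool" where
  "weakly_null xs \<longleftrightarrow>
     (\<forall>f::'a \<Rightarrow> real. bounded_linear f \<longrightarrow> (\<lambda>n. f (xs n)) \<longlonglongrightarrow> 0)"

definition Mid :: "'a::real_normed_vector \<Rightarrow> 'a \<Rightarrow> real \<Rightarrow> 'a set" where
  "Mid x y \<delta> = {z. max (norm (x - z)) (norm (y - z)) \<le> (1/2) * (1 + \<delta>) * norm (x - y)}"

end

theory Submission imports Defs begin

lemma line_bound:
  fixes g :: "'a::real_normed_vector"
  assumes "subspace H" "closed H" "g \<notin> H"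
  obtains d where "d > 0" "\<And>h k. h \<in> H \<Longrightarrow> \<bar>k\<bar> * d \<le> norm (h + k *\<^sub>R g)"
proof -
  have "H \<noteq> {}" using subspace_0[OF assms(1)] by auto
  define d where "d = infdist g H"
  have "d > 0" unfolding d_def by (rule infdist_pos_not_in_closed[OF assms(2) \<open>H\<noteq>{}\<close> assms(3)])
  moreover have "\<bar>k\<bar> * d \<le> norm (h + k *\<^sub>R g)" if "h \<in> H" for h k
  proof (cases "k = 0")
    case True then show ?thesis by simp
  next
    case False
    have m: "- ((1/k) *\<^sub>R h) \<in> H" using that assms(1) by (simp add: subspace_neg subspace_scale)
    have "d \<le> dist g (- ((1/k) *\<^sub>R h))" unfolding d_def by (rule infdist_le[OF m])
    also have "\<dots> = norm ((1/k) *\<^sub>R h + g)" by (simp add: dist_norm add.commute)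
    finally have "\<bar>k\<bar> * d \<le> \<bar>k\<bar> * norm ((1/k) *\<^sub>R h + g)" by (simp add: mult_left_mono)
    also have "\<dots> = norm (k *\<^sub>R ((1/k) *\<^sub>R h + g))" by simp
    also have "k *\<^sub>R ((1/k) *\<^sub>R h + g) = h + k *\<^sub>R g" using False by (simp add: scaleR_add_right)
    finally show ?thesis .
  qed
  ultimately show ?thesis using that by blast
qed

lemma span_insert_sub:
  assumes "subspace H"
  shows "span (insert g H) = {x. \<exists>k. x - k *\<^sub>R g \<in> H}"
proof -
  have "span H = H" using assms by (simp add: span_eq_iff)
  then show ?thesis by (simp only: span_insert)
qed

lemma closed_span_insert:
  fixes g :: "'a::real_normed_vector"
  assumes "subspace H" "closed H"
  shows "closed (span (insert g H))"
proof (cases "g \<in> H")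
  case True
  then have "span (insert g H) = H" using assms(1) span_redundant[of g H]
    by (simp add: span_eq_iff span_base)
  then show ?thesis using assms by simp
next
  case False
  obtain d where d: "d > 0" "\<And>h k. h \<in> H \<Longrightarrow> \<bar>k\<bar> * d \<le> norm (h + k *\<^sub>R g)"
    using line_bound[OF assms False] by blast
  show ?thesis
    unfolding closed_sequential_limits span_insert_sub[OF assms(1)]
  proof (intro allI impI, elim conjE)
    fix z l assume zS: "\<forall>n. z n \<in> {x. \<exists>k. x - k *\<^sub>R g \<in> H}" and zl: "z \<longlonglongrightarrow> l"
    define k where "k n = (SOME k. z n - k *\<^sub>R g \<in> H)" for n
    have kH: "z n - k n *\<^sub>R g \<in> H" for n
      using zS unfolding k_def by (metis (mono_tags, lifting) mem_Collect_eq someI)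
    have kb: "\<bar>k m - k j\<bar> * d \<le> dist (z m) (z j)" for m j
    proof -
      have "(z m - k m *\<^sub>R g) - (z j - k j *\<^sub>R g) \<in> H" using kH assms(1) by (simp add: subspace_diff)
      from d(2)[OF this, of "k m - k j"] show ?thesis
        by (simp add: dist_norm algebra_simps)
    qed
    have "Cauchy z" using zl by (rule LIMSEQ_imp_Cauchy)
    have "Cauchy k"
    proof (rule metric_CauchyI)
      fix e :: real assume "e > 0"
      then obtain M where M: "\<forall>m\<ge>M. \<forall>n\<ge>M. dist (z m) (z n) < e * d"
        using metric_CauchyD[OF \<open>Cauchy z\<close>, of "e*d"] d(1) by auto
      show "\<exists>M. \<forall>m\<ge>M. \<forall>n\<ge>M. dist (k m) (k n) < e"
      proof (intro exI allI impI)
        fix m n assume "M \<le> m" "M \<le> n"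
        then have "\<bar>k m - k n\<bar> * d < e * d" using M kb[of m n] by fastforce
        then show "dist (k m) (k n) < e" using d(1) by (simp add: dist_real_def)
      qed
    qed
    then obtain K where kK: "k \<longlonglongrightarrow> K" using Cauchy_convergent_iff convergent_def by blast
    have "(\<lambda>n. z n - k n *\<^sub>R g) \<longlonglongrightarrow> l - K *\<^sub>R g"
      by (intro tendsto_intros zl kK)
    then have "l - K *\<^sub>R g \<in> H" by (rule closed_sequentially[OF assms(2) kH])
    then show "l \<in> {x. \<exists>k. x - k *\<^sub>R g \<in> H}" by blast
  qed
qed

lemma closed_span_Un:
  fixes E :: "'a::real_normed_vector set"
  assumes "finite F" "subspace E" "closed E"
  shows "closed (span (E \<union> F))"
  using assms(1)
proof induct
  case empty
  have "span E = E" using assms by (simp add: span_eq_iff)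
  then show ?case using assms(3) by (simp only: Un_empty_right)
next
  case (insert g F)
  have "span (E \<union> insert g F) = span (insert g (span (E \<union> F)))"
    by (simp add: span_insert span_span)
  then show ?case using closed_span_insert[OF subspace_span insert(3)] by simp
qed

definition coef :: "'a::real_normed_vector set \<Rightarrow> 'a \<Rightarrow> 'a \<Rightarrow> real" where
  "coef H g z = (THE k. z - k *\<^sub>R g \<in> H)"

lemma coef_unique:
  assumes "subspace H" "g \<notin> H" "z - a *\<^sub>R g \<in> H" "z - b *\<^sub>R g \<in> H"
  shows "a = b"
proof (rule ccontr)
  assume "a \<noteq> b"
  have "(z - a *\<^sub>R g) - (z - b *\<^sub>R g) \<in> H" by (rule subspace_diff[OF assms(1,3,4)])
  moreover have "(z - a *\<^sub>R g) - (z - b *\<^sub>R g) = (b - a) *\<^sub>R g" by (simp add: algebra_simps)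
  ultimately have "(b - a) *\<^sub>R g \<in> H" by simp
  then have "(1/(b-a)) *\<^sub>R ((b - a) *\<^sub>R g) \<in> H" by (rule subspace_scale[OF assms(1)])
  moreover have "(1/(b-a)) *\<^sub>R ((b - a) *\<^sub>R g) = g" using \<open>a \<noteq> b\<close> by simp
  ultimately show False using assms(2) by simp
qed

lemma coef_eq:
  assumes "subspace H" "g \<notin> H" "z - k *\<^sub>R g \<in> H"
  shows "coef H g z = k"
  unfolding coef_def by (rule the_equality[where P="\<lambda>k. z - k *\<^sub>R g \<in> H", OF assms(3)]) (metis coef_unique assms)

lemma coef_mem:
  assumes "subspace H" "g \<notin> H" "span (insert g H) = UNIV"
  shows "z - coef H g z *\<^sub>R g \<in> H"
proof -
  have "z \<in> span (insert g H)" using assms(3) by simp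
  then obtain k where "z - k *\<^sub>R g \<in> H" using span_insert_sub[OF assms(1)] by auto
  then show ?thesis using coef_eq[OF assms(1,2)] by simp
qed

lemma coef_bl:
  assumes "subspace H" "closed H" "g \<notin> H" "span (insert g H) = UNIV"
  shows "bounded_linear (coef H g)"
proof -
  obtain d where d: "d > 0" "\<And>h k. h \<in> H \<Longrightarrow> \<bar>k\<bar> * d \<le> norm (h + k *\<^sub>R g)"
    using line_bound[OF assms(1-3)] by blast
  note m = coef_mem[OF assms(1,3,4)]
  show ?thesis
  proof (rule bounded_linear_intro)
    fix x y
    have "(x - coef H g x *\<^sub>R g) + (y - coef H g y *\<^sub>R g) \<in> H" using m assms(1) by (simp add: subspace_add)
    then have "(x + y) - (coef H g x + coef H g y) *\<^sub>R g \<in> H" by (simp add: algebra_simps)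
    then show "coef H g (x + y) = coef H g x + coef H g y" by (rule coef_eq[OF assms(1,3)])
  next
    fix r x
    have "r *\<^sub>R (x - coef H g x *\<^sub>R g) \<in> H" using m assms(1) by (simp add: subspace_scale)
    then have "r *\<^sub>R x - (r * coef H g x) *\<^sub>R g \<in> H" by (simp add: algebra_simps)
    then show "coef H g (r *\<^sub>R x) = r *\<^sub>R coef H g x" using coef_eq[OF assms(1,3)] by simp
  next
    fix x
    have "\<bar>coef H g x\<bar> * d \<le> norm ((x - coef H g x *\<^sub>R g) + coef H g x *\<^sub>R g)" by (rule d(2)[OF m])
    then have "\<bar>coef H g x\<bar> * d \<le> norm x" by simp
    then show "norm (coef H g x) \<le> norm x * (1/d)" using d(1) by (simp add: field_simps)
  qed
qed

lemma weak_dist: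
  fixes E :: "'a::real_normed_vector set"
  assumes "finite F" "subspace E" "closed E" "span (E \<union> F) = UNIV" "weakly_null xs"
  shows "\<forall>\<epsilon>>0. \<exists>N. \<forall>n\<ge>N. \<exists>e\<in>E. norm (xs n - e) < \<epsilon>"
  using assms
proof (induct F arbitrary: E)
  case empty
  have "E = UNIV" using empty(3) span_eq_iff[of E] empty(1) by (metis Un_empty_right)
  then show ?case by (metis UNIV_I diff_self norm_zero)
next
  case (insert g F E)
  show ?case
  proof (cases "g \<in> span (E \<union> F)")
    case True
    then have "span (E \<union> F) = UNIV" using insert(6) span_redundant[OF True] by simp
    then show ?thesis using insert by blast
  next
    case False
    define H where "H = span (E \<union> F)"
    have sH: "subspace H" unfolding H_def by simp
    have cH: "closed H" unfolding H_def by (rule closed_span_Un[OF insert(1,4,5)])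
    have gH: "g \<notin> H" using False H_def by simp
    have spH: "span (insert g H) = UNIV" unfolding H_def using insert(6)
      by (simp add: span_insert span_span)
    have EH: "E \<subseteq> H" unfolding H_def using span_superset by blast
    define \<phi> where "\<phi> = coef H g"
    have bl: "bounded_linear \<phi>" unfolding \<phi>_def by (rule coef_bl[OF sH cH gH spH])
    obtain B where B: "B > 0" "\<And>z. norm (\<phi> z) \<le> norm z * B"
      using bounded_linear.pos_bounded[OF bl] by blast
    have phix: "(\<lambda>n. \<phi> (xs n)) \<longlonglongrightarrow> 0" using insert(7) bl unfolding weakly_null_def by blast
    define E1 where "E1 = span (insert g E)"
    have sE1: "subspace E1" unfolding E1_def by simp
    have cE1: "closed E1" unfolding E1_def
    proof -
      have "span E = E" using insert(4) by (simp add: span_eq_iff)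
      then show "closed (span (insert g E))" using closed_span_insert[OF insert(4,5), of g] by simp
    qed
    have "span (E1 \<union> F) = UNIV"
    proof -
      have "E \<union> insert g F \<subseteq> E1 \<union> F" unfolding E1_def using span_superset by blast
      then have "span (E \<union> insert g F) \<subseteq> span (E1 \<union> F)" by (rule span_mono)
      then show ?thesis using insert(6) by auto
    qed
    from insert(3)[OF sE1 cE1 this insert(7)]
    have IH: "\<forall>\<epsilon>>0. \<exists>N. \<forall>n\<ge>N. \<exists>e\<in>E1. norm (xs n - e) < \<epsilon>" .
    have E1c: "e1 \<in> E1 \<Longrightarrow> \<exists>e\<in>E. e1 = e + \<phi> e1 *\<^sub>R g" for e1
    proof -
      assume "e1 \<in> E1"
      then obtain k where k: "e1 - k *\<^sub>R g \<in> E" unfolding E1_def span_insert_sub[OF insert(4)] by blast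
      then have "\<phi> e1 = k" unfolding \<phi>_def using EH coef_eq[OF sH gH] by blast
      then show ?thesis using k by (metis diff_add_cancel)
    qed
    show ?thesis
    proof (intro allI impI)
      fix \<epsilon> :: real assume "\<epsilon> > 0"
      define \<epsilon>' where "\<epsilon>' = \<epsilon> / (1 + (1 + B) * (norm g + 1))"
      have den: "1 + (1 + B) * (norm g + 1) > 0" using B by (simp add: add_pos_nonneg)
      have "\<epsilon>' > 0" unfolding \<epsilon>'_def using \<open>\<epsilon>>0\<close> den by simp
      obtain N1 where N1: "\<forall>n\<ge>N1. \<exists>e\<in>E1. norm (xs n - e) < \<epsilon>'" using IH \<open>\<epsilon>'>0\<close> by blast
      obtain N2 where N2: "\<forall>n\<ge>N2. norm (\<phi> (xs n)) < \<epsilon>'"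
        using phix \<open>\<epsilon>'>0\<close> unfolding LIMSEQ_iff by (metis diff_zero)
      show "\<exists>N. \<forall>n\<ge>N. \<exists>e\<in>E. norm (xs n - e) < \<epsilon>"
      proof (intro exI allI impI)
        fix n assume "max N1 N2 \<le> n"
        then obtain e1 where e1: "e1 \<in> E1" "norm (xs n - e1) < \<epsilon>'" using N1 by auto
        have p: "\<bar>\<phi> (xs n)\<bar> < \<epsilon>'" using N2 \<open>max N1 N2 \<le> n\<close> by auto
        obtain e where e: "e \<in> E" "e1 = e + \<phi> e1 *\<^sub>R g" using E1c[OF e1(1)] by blast
        have lin: "\<phi> e1 = \<phi> (xs n) - \<phi> (xs n - e1)" using linear_diff[OF bounded_linear.linear[OF bl]] by simp
        have "\<bar>\<phi> (xs n - e1)\<bar> \<le> \<epsilon>' * B" using B(2)[of "xs n - e1"] e1(2) B(1)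
          by (smt (verit) mult_right_mono real_norm_def)
        then have ph: "\<bar>\<phi> e1\<bar> \<le> \<epsilon>' * (1 + B)" using p lin by (simp add: algebra_simps)
        have ee: "e = e1 - \<phi> e1 *\<^sub>R g" using e(2) by (metis add_diff_cancel_right')
        have "norm (xs n - e) = norm ((xs n - e1) + \<phi> e1 *\<^sub>R g)" by (simp add: ee algebra_simps)
        also have "\<dots> \<le> norm (xs n - e1) + \<bar>\<phi> e1\<bar> * norm g" by (metis norm_scaleR norm_triangle_ineq)
        also have "\<dots> < \<epsilon>' + \<epsilon>' * (1 + B) * (norm g + 1)"
        proof -
          have "\<bar>\<phi> e1\<bar> * norm g \<le> \<epsilon>' * (1 + B) * (norm g + 1)"
            using ph by (intro mult_mono) auto
          then show ?thesis using e1(2) by linarith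
        qed
        also have "\<dots> = \<epsilon>' * (1 + (1 + B) * (norm g + 1))" by (simp add: algebra_simps)
        also have "\<dots> = \<epsilon>" unfolding \<epsilon>'_def using den by simp
        finally show "\<exists>e\<in>E. norm (xs n - e) < \<epsilon>" using e(1) by blast
      qed
    qed
  qed
qed

lemma half: "(1/2) *\<^sub>R a + (1/2) *\<^sub>R a = (a::'a::real_vector)"
  by (metis scaleR_add_left field_sum_of_halves scaleR_one)

lemma mid_x: "x - ((1/2) *\<^sub>R (x + y) + s *\<^sub>R z) = (1/2) *\<^sub>R (x - y) - s *\<^sub>R (z::'a::real_vector)"
proof -
  have "x = (1/2) *\<^sub>R x + (1/2) *\<^sub>R x" by (rule half[symmetric])
  then show ?thesis by (simp add: algebra_simps)
qed

lemma mid_y: "y - ((1/2) *\<^sub>R (x + y) + s *\<^sub>R z) = - ((1/2) *\<^sub>R (x - y) + s *\<^sub>R (z::'a::real_vector))"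
proof -
  have "y = (1/2) *\<^sub>R y + (1/2) *\<^sub>R y" by (rule half[symmetric])
  then show ?thesis by (simp add: algebra_simps)
qed

lemma eqt:
  fixes w h' :: "'a::real_vector"
  shows "w + t *\<^sub>R (a *\<^sub>R h') = ((1+a)/2) *\<^sub>R (w + t *\<^sub>R h') + ((1-a)/2) *\<^sub>R (w + t *\<^sub>R (- h'))"
proof -
  have "((1+a)/2) *\<^sub>R (w + t *\<^sub>R h') + ((1-a)/2) *\<^sub>R (w + t *\<^sub>R (- h'))
     = ((1+a)/2 + (1-a)/2) *\<^sub>R w + (t * ((1+a)/2) - t * ((1-a)/2)) *\<^sub>R h'"
    by (simp add: algebra_simps)
  also have "(1+a)/2 + (1-a)/2 = (1::real)" by (simp add: field_simps)
  also have "t * ((1+a)/2) - t * ((1-a)/2) = t * a" by (simp add: field_simps)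
  finally show ?thesis by simp
qed

lemma convtri:
  fixes u v :: "'a::real_normed_vector"
  assumes "0 < a" "a \<le> (1::real)"
  shows "norm (((1+a)/2) *\<^sub>R u + ((1-a)/2) *\<^sub>R v) \<le> ((1+a)/2) * norm u + ((1-a)/2) * norm v"
proof -
  have "norm (((1+a)/2) *\<^sub>R u + ((1-a)/2) *\<^sub>R v) \<le> norm (((1+a)/2) *\<^sub>R u) + norm (((1-a)/2) *\<^sub>R v)" by (rule norm_triangle_ineq)
  also have "\<dots> = ((1+a)/2) * norm u + ((1-a)/2) * norm v" using assms by simp
  finally show ?thesis .
qed

lemma conv_bound:
  fixes w :: "'a::real_normed_vector"
  assumes "subspace E" "\<And>h. h \<in> E \<Longrightarrow> norm h = 1 \<Longrightarrow> norm (w + t *\<^sub>R h) \<le> K"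
    "norm w \<le> K" "h \<in> E" "norm h \<le> 1"
  shows "norm (w + t *\<^sub>R h) \<le> K"
proof (cases "h = 0")
  case True then show ?thesis using assms(3) by simp
next
  case False
  define a where "a = norm h"
  have a: "0 < a" "a \<le> 1" using False assms(5) unfolding a_def by auto
  define h' where "h' = (1/a) *\<^sub>R h"
  have h'E: "h' \<in> E" "- h' \<in> E" unfolding h'_def using assms(1,4) by (auto simp: subspace_scale subspace_neg)
  have nh': "norm h' = 1" "norm (- h') = 1" unfolding h'_def a_def using False by auto
  have eq: "w + t *\<^sub>R h = ((1+a)/2) *\<^sub>R (w + t *\<^sub>R h') + ((1-a)/2) *\<^sub>R (w + t *\<^sub>R (- h'))"
  proof -
    have "h = a *\<^sub>R h'" unfolding h'_def using a by simp
    then show ?thesis using eqt[of w t a h'] by simp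
  qed
  have "norm (w + t *\<^sub>R h) \<le> ((1+a)/2) * norm (w + t *\<^sub>R h') + ((1-a)/2) * norm (w + t *\<^sub>R (- h'))"
    unfolding eq using a by (rule convtri)
  also have "\<dots> \<le> ((1+a)/2) * K + ((1-a)/2) * K"
    using assms(2)[OF h'E(1) nh'(1)] assms(2)[OF h'E(2) nh'(2)] a
    by (intro add_mono mult_left_mono) auto
  also have "\<dots> = K" by (simp add: field_simps)
  finally show ?thesis .
qed

lemma near_bound:
  fixes w :: "'a::real_normed_vector"
  assumes "subspace E" "\<And>h. h \<in> E \<Longrightarrow> norm h = 1 \<Longrightarrow> norm (w + t *\<^sub>R h) \<le> K"
    "norm w \<le> K" "0 \<le> t" "t \<le> 1" "norm x \<le> 1" "e \<in> E" "norm (x - e) < \<epsilon>"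
  shows "norm (w + t *\<^sub>R x) \<le> K + 2 * \<epsilon>"
proof -
  define e' where "e' = (if norm e \<le> 1 then e else (1/norm e) *\<^sub>R e)"
  have ne: "norm e < 1 + \<epsilon>" using assms(6,8) norm_triangle_sub[of e x] by (simp add: norm_minus_commute) 
  have e'E: "e' \<in> E" "norm e' \<le> 1" unfolding e'_def using assms(1,7) by (auto simp: subspace_scale)
  have dee: "norm (e - e') \<le> \<epsilon>"
  proof (cases "norm e \<le> 1")
    case True then show ?thesis unfolding e'_def using assms(8) by (smt (verit) norm_ge_zero diff_self norm_zero)
  next
    case False
    have "e - e' = (1 - 1/norm e) *\<^sub>R e" unfolding e'_def using False by (simp add: algebra_simps)
    moreover have "0 \<le> 1 - 1/norm e" using False by (simp add: divide_le_eq_1)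
    moreover have enz: "e \<noteq> 0" using False by (metis norm_zero zero_le_one)
    ultimately have "norm (e - e') = (1 - 1/norm e) * norm e" by simp
    also have "\<dots> = norm e - 1" using enz by (simp add: field_simps)
    finally show ?thesis using ne by simp
  qed
  have dx: "norm (x - e') \<le> 2 * \<epsilon>"
  proof -
    have "norm (x - e') \<le> norm (x - e) + norm (e - e')" by (metis diff_add_cancel norm_triangle_ineq add_diff_eq diff_diff_eq2)
    then show ?thesis using assms(8) dee by simp
  qed
  have "w + t *\<^sub>R x = (w + t *\<^sub>R e') + t *\<^sub>R (x - e')" by (simp add: algebra_simps)
  then have tri: "norm (w + t *\<^sub>R x) \<le> norm (w + t *\<^sub>R e') + norm (t *\<^sub>R (x - e'))"
    by (metis norm_triangle_ineq)
  have b2: "norm (t *\<^sub>R (x - e')) \<le> 2 * \<epsilon>"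
  proof -
    have "norm (t *\<^sub>R (x - e')) = t * norm (x - e')" using assms(4) by simp
    also have "\<dots> \<le> 1 * (2 * \<epsilon>)" using assms(4,5) dx by (intro mult_mono) auto
    finally show ?thesis by simp
  qed
  show ?thesis using conv_bound[OF assms(1,2,3) e'E] tri b2 by linarith
qed

theorem lemma5p1:
  fixes p :: real
  assumes "1 < p"
    and "asymptotically_p_uniformly_smooth TYPE('a::banach) p"
  shows "\<exists>c>0. \<forall>(x::'a) y \<delta> (xs::nat \<Rightarrow> 'a).
           \<delta> > 0 \<and> weakly_null xs \<and> (\<forall>n. norm (xs n) \<le> 1) \<longrightarrow>
           (\<exists>n0::nat. \<forall>n>n0.
              (1/2) *\<^sub>R (x + y) + (\<delta> powr (1/p) * norm ((1/2) *\<^sub>R (x - y))) *\<^sub>R xs n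
                \<in> Mid x y (c * \<delta>))"
proof -
  obtain C where C: "C > 0" "\<forall>t\<in>{0..1}. asym_smooth_mod TYPE('a) t \<le> ereal (C * t powr p)"
    using assms(2) unfolding asymptotically_p_uniformly_smooth_def by blast
  define c where "c = 2 * C + 1"
  have c1: "c \<ge> 1" unfolding c_def using C(1) by simp
  show ?thesis
  proof (intro exI[of _ c] conjI allI impI)
    show "c > 0" using c1 by simp
    fix x y :: 'a and \<delta> :: real and xs :: "nat \<Rightarrow> 'a"
    assume Hy: "\<delta> > 0 \<and> weakly_null xs \<and> (\<forall>n. norm (xs n) \<le> 1)"
    then have d0: "\<delta> > 0" and wn: "weakly_null xs" and xb: "\<And>n. norm (xs n) \<le> 1" by auto
    define v where "v = (1/2) *\<^sub>R (x - y)"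
    define t where "t = \<delta> powr (1/p)"
    have t0: "t > 0" unfolding t_def using d0 by simp
    have key: "\<exists>N. \<forall>n\<ge>N. norm (v - (t * norm v) *\<^sub>R xs n) \<le> (1 + c * \<delta>) * norm v
                  \<and> norm (v + (t * norm v) *\<^sub>R xs n) \<le> (1 + c * \<delta>) * norm v"
    proof (cases "v = 0")
      case True then show ?thesis using d0 c1 by simp
    next
      case vnz: False
      show ?thesis
      proof (cases "\<delta> \<ge> 1")
        case True
        have "t \<le> \<delta> powr 1" unfolding t_def using True assms(1) by (intro powr_mono) auto
        then have td: "t \<le> \<delta>" using d0 by simp
        have b: "norm ((t * norm v) *\<^sub>R xs n) \<le> c * \<delta> * norm v" for n
        proof -
          have "norm ((t * norm v) *\<^sub>R xs n) = t * norm v * norm (xs n)" using t0 by simp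
          also have "\<dots> \<le> t * norm v * 1" using xb[of n] t0 by (intro mult_left_mono) auto
          also have "\<dots> \<le> c * \<delta> * norm v"
          proof -
            have "\<delta> \<le> c * \<delta>" using c1 d0 by (simp add: mult_le_cancel_right1)
            then have "t \<le> c * \<delta>" using td by linarith
            then show ?thesis by (simp add: mult_right_mono)
          qed
          finally show ?thesis .
        qed
        show ?thesis
        proof (intro exI allI impI conjI)
          fix n :: nat
          show "norm (v - (t * norm v) *\<^sub>R xs n) \<le> (1 + c * \<delta>) * norm v"
            using norm_triangle_ineq4[of v "(t * norm v) *\<^sub>R xs n"] b[of n] by (simp add: algebra_simps)
          show "norm (v + (t * norm v) *\<^sub>R xs n) \<le> (1 + c * \<delta>) * norm v"
            using norm_triangle_ineq[of v "(t * norm v) *\<^sub>R xs n"] b[of n] by (simp add: algebra_simps)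
        qed
      next
        case False
        then have d1: "\<delta> < 1" by simp
        have t1: "t \<le> 1" unfolding t_def using d0 d1 assms(1) by (simp add: powr_le1)
        have tp: "t powr p = \<delta>" unfolding t_def using d0 assms(1) by (simp add: powr_powr)
        define w where "w = (1 / norm v) *\<^sub>R v"
        have nw: "norm w = 1" unfolding w_def using vnz by simp
        have "asym_smooth_mod TYPE('a) t \<le> ereal (C * \<delta>)" using C(2) t0 t1 tp by auto
        moreover have "(INF E\<in>{E. finite_codim E}. SUP h\<in>{h\<in>E. norm h = 1}. ereal (norm (w + t *\<^sub>R h) - 1))
            \<le> asym_smooth_mod TYPE('a) t"
          unfolding asym_smooth_mod_def by (rule SUP_upper) (use nw in simp)
        moreover have "ereal (C * \<delta>) < ereal (2 * C * \<delta>)" using C(1) d0 by simp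
        ultimately have "(INF E\<in>{E. finite_codim E}. SUP h\<in>{h\<in>E. norm h = 1}. ereal (norm (w + t *\<^sub>R h) - 1))
            < ereal (2 * C * \<delta>)" by (meson order_le_less_trans)
        then obtain E where E: "finite_codim E"
          "(SUP h\<in>{h\<in>E. norm h = 1}. ereal (norm (w + t *\<^sub>R h) - 1)) < ereal (2 * C * \<delta>)"
          unfolding INF_less_iff by auto
        define K where "K = 1 + 2 * C * \<delta>"
        have hK: "norm (w + t *\<^sub>R h) \<le> K" if "h \<in> E" "norm h = 1" for h
        proof -
          have "ereal (norm (w + t *\<^sub>R h) - 1) \<le> (SUP h\<in>{h\<in>E. norm h = 1}. ereal (norm (w + t *\<^sub>R h) - 1))"
            by (rule SUP_upper) (use that in simp)
          then have "ereal (norm (w + t *\<^sub>R h) - 1) < ereal (2 * C * \<delta>)" by (rule order_le_less_trans[OF _ E(2)])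
          then show ?thesis unfolding K_def by simp
        qed
        have wK: "norm w \<le> K" unfolding K_def using nw C(1) d0 by simp
        obtain F where sE: "subspace E" and cE: "closed E" and F: "finite F" "span (E \<union> F) = UNIV"
          using E(1) unfolding finite_codim_def by blast
        obtain N where N: "\<forall>n\<ge>N. \<exists>e\<in>E. norm (xs n - e) < \<delta>/2"
          using weak_dist[OF F(1) sE cE F(2) wn] d0 by (meson half_gt_zero)
        show ?thesis
        proof (intro exI allI impI)
          fix n assume "N \<le> n"
          then obtain e where e: "e \<in> E" "norm (xs n - e) < \<delta>/2" using N by blast
          have me: "- e \<in> E" using sE e(1) by (simp add: subspace_neg)
          have b1: "norm (w + t *\<^sub>R xs n) \<le> K + 2 * (\<delta>/2)"
            by (rule near_bound[OF sE hK wK less_imp_le[OF t0] t1 xb e])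
          have b2: "norm (w + t *\<^sub>R (- xs n)) \<le> K + 2 * (\<delta>/2)"
            by (rule near_bound[OF sE hK wK less_imp_le[OF t0] t1 _ me]) (use xb e in \<open>auto simp: norm_minus_commute\<close>)
          have Kc: "K + 2 * (\<delta>/2) = 1 + c * \<delta>" unfolding K_def c_def by (simp add: algebra_simps)
          have v1: "v + (t * norm v) *\<^sub>R xs n = norm v *\<^sub>R (w + t *\<^sub>R xs n)"
            unfolding w_def using vnz by (simp add: algebra_simps)
          have v2: "v - (t * norm v) *\<^sub>R xs n = norm v *\<^sub>R (w + t *\<^sub>R (- xs n))"
            unfolding w_def using vnz by (simp add: algebra_simps)
          show "norm (v - (t * norm v) *\<^sub>R xs n) \<le> (1 + c * \<delta>) * norm v \<and>
                norm (v + (t * norm v) *\<^sub>R xs n) \<le> (1 + c * \<delta>) * norm v"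
            unfolding v1 v2 using b1 b2 Kc by (simp add: mult.commute mult_left_mono)
        qed
      qed
    qed
    then obtain N where N: "\<And>n. n \<ge> N \<Longrightarrow> norm (v - (t * norm v) *\<^sub>R xs n) \<le> (1 + c * \<delta>) * norm v
                  \<and> norm (v + (t * norm v) *\<^sub>R xs n) \<le> (1 + c * \<delta>) * norm v" by blast
    show "\<exists>n0::nat. \<forall>n>n0.
              (1/2) *\<^sub>R (x + y) + (\<delta> powr (1/p) * norm ((1/2) *\<^sub>R (x - y))) *\<^sub>R xs n
                \<in> Mid x y (c * \<delta>)"
    proof (intro exI allI impI)
      fix n assume "N < n"
      then have Nn: "norm (v - (t * norm v) *\<^sub>R xs n) \<le> (1 + c * \<delta>) * norm v"
                "norm (v + (t * norm v) *\<^sub>R xs n) \<le> (1 + c * \<delta>) * norm v" using N by auto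
      define z where "z = (1/2) *\<^sub>R (x + y) + (\<delta> powr (1/p) * norm ((1/2) *\<^sub>R (x - y))) *\<^sub>R xs n"
      have z1: "x - z = v - (t * norm v) *\<^sub>R xs n" unfolding z_def v_def t_def by (rule mid_x)
      have z2: "y - z = - (v + (t * norm v) *\<^sub>R xs n)" unfolding z_def v_def t_def by (rule mid_y)
      have nxy: "(1/2) * (1 + c * \<delta>) * norm (x - y) = (1 + c * \<delta>) * norm v" unfolding v_def by simp
      show "(1/2) *\<^sub>R (x + y) + (\<delta> powr (1/p) * norm ((1/2) *\<^sub>R (x - y))) *\<^sub>R xs n
                \<in> Mid x y (c * \<delta>)"
        unfolding Mid_def z_def[symmetric] mem_Collect_eq nxy z1 z2 norm_minus_cancel using Nn by simp
    qed
  qed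
qed

end
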